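(* Let $N\ge2$ and let $u\in C(\mathbb{R}^N,(0,\infty))$ be separable in $\mathbb{R}^N$, and assume there is no point $x^*\in\mathbb{R}^N$ such that $u$ is radially symmetric with respect to $x^*$. Let $\mathcal{L}$ be the set of all symmetry axes of $u$. Then: (i) for every $x\in\mathbb{R}^N$ there exists a unique $L_x\in\mathcal{L}$ with $x\in L_x$; consequently $L_y=L_x$ whenever $y\in L_x$; (ii) for all $x,y\in\mathbb{R}^N$, either $L_x=L_y$ or $L_x$ is parallel to $L_y$.
   Context: For an open half-space $H\subset\mathbb{R}^N$, $\sigma_H$ is the reflection across $\partial H$. A function $u\in C(\mathbb{R}^N,\mathbb{R})$ is separable in $\mathbb{R}^N$ if for every open half-space $H\subset\mathbb{R}^N$, either $u(x)\ge u(\sigma_Hx)$ for all $x\in H$, or $u(x)\le u(\sigma_Hx)$ for all $x\in H$. A line $L\subset\mathbb{R}^N$ is a symmetry axis of $u$ if for every $\alpha>0$, every affine hyperplane $V$ orthogonal to $L$, and the point $z\in L\cap V$, the restriction of $u$ to $S^{N-1}_\alpha(z)\cap V$ is constant, where $S^{N-1}_\alpha(z)$ is the sphere of radius $\alpha$ centered at $z$. $u$ is radially symmetric with respect to $x^*$ if $u(x)$ depends only on $|x-x^*|$. *)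

theory Defs
  imports "HOL-Analysis.Analysis"
begin

definition open_halfspace :: "'a::euclidean_space set \<Rightarrow> bool" where
  "open_halfspace H \<longleftrightarrow> (\<exists>a b. a \<noteq> 0 \<and> H = {x. a \<bullet> x > b})"

definition refl_hyp :: "'a::euclidean_space \<Rightarrow> real \<Rightarrow> 'a \<Rightarrow> 'a" where
  "refl_hyp a b x = x - (2 * (a \<bullet> x - b) / (a \<bullet> a)) *\<^sub>R a"

definition separable :: "('a::euclidean_space \<Rightarrow> real) \<Rightarrow> bool" where
  "separable u \<longleftrightarrow> (\<forall>a b. a \<noteq> 0 \<longrightarrow>
     (let H = {x. a \<bullet> x > b} in
       (\<forall>x\<in>H. u x \<ge> u (refl_hyp a b x)) \<or> (\<forall>x\<in>H. u x \<le> u (refl_hyp a b x))))"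

definition radially_symmetric :: "('a::euclidean_space \<Rightarrow> real) \<Rightarrow> 'a \<Rightarrow> bool" where
  "radially_symmetric u xs \<longleftrightarrow> (\<exists>f. \<forall>x. u x = f (norm (x - xs)))"

definition line_through :: "'a::real_vector \<Rightarrow> 'a \<Rightarrow> 'a set" where
  "line_through p d = {p + t *\<^sub>R d | t. True}"

definition is_line :: "'a::euclidean_space set \<Rightarrow> bool" where
  "is_line L \<longleftrightarrow> (\<exists>p d. d \<noteq> 0 \<and> L = line_through p d)"

definition orth_hyperplane :: "'a::euclidean_space set \<Rightarrow> 'a set \<Rightarrow> bool" where
  "orth_hyperplane L V \<longleftrightarrow>
     (\<exists>p d c. d \<noteq> 0 \<and> L = line_through p d \<and> V = {x. d \<bullet> x = c})"

definition symmetry_axis :: "('a::euclidean_space \<Rightarrow> real) \<Rightarrow> 'a set \<Rightarrow> bool" where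
  "symmetry_axis u L \<longleftrightarrow> is_line L \<and>
     (\<forall>\<alpha> V z. \<alpha> > 0 \<longrightarrow> orth_hyperplane L V \<longrightarrow> z \<in> L \<inter> V \<longrightarrow>
        (\<exists>c. \<forall>x \<in> sphere z \<alpha> \<inter> V. u x = c))"

definition parallel_lines :: "'a::euclidean_space set \<Rightarrow> 'a set \<Rightarrow> bool" where
  "parallel_lines L M \<longleftrightarrow>
     (\<exists>p q d. d \<noteq> 0 \<and> L = line_through p d \<and> M = line_through q d)"

text \<open>The (by part (i), unique) symmetry axis through x.\<close>
definition axis_at :: "('a::euclidean_space \<Rightarrow> real) \<Rightarrow> 'a \<Rightarrow> 'a set" where
  "axis_at u x = (THE L. symmetry_axis u L \<and> x \<in> L)"

end

theory Submission
  imports Defs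
begin


lemma refl_inner: "e \<noteq> 0 \<Longrightarrow> e \<bullet> refl_hyp e b x = 2*b - e \<bullet> x"
  by (simp add: refl_hyp_def inner_diff_right field_simps)

lemma refl_invol: "e \<noteq> 0 \<Longrightarrow> refl_hyp e b (refl_hyp e b x) = x"
proof -
  assume e: "e \<noteq> 0"
  have "refl_hyp e b (refl_hyp e b x) = refl_hyp e b x - (2 * (2*b - e \<bullet> x - b) / (e \<bullet> e)) *\<^sub>R e"
    using refl_inner[OF e] by (simp add: refl_hyp_def)
  also have "\<dots> = x - ((2 * (e \<bullet> x - b) / (e \<bullet> e)) + (2 * (2*b - e \<bullet> x - b) / (e \<bullet> e))) *\<^sub>R e"
    by (simp add: refl_hyp_def scaleR_left_distrib)
  also have "(2 * (e \<bullet> x - b) / (e \<bullet> e)) + (2 * (2*b - e \<bullet> x - b) / (e \<bullet> e)) = 0"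
    by (simp add: add_divide_distrib[symmetric])
  finally show ?thesis by simp
qed

lemma refl_add: "refl_hyp e b (x + v) = refl_hyp e b x + (v - (2*(e \<bullet> v)/(e \<bullet> e)) *\<^sub>R e)"
proof -
  have "(2 * (e \<bullet> (x+v) - b) / (e \<bullet> e)) = (2 * (e \<bullet> x - b) / (e \<bullet> e)) + (2*(e \<bullet> v)/(e \<bullet> e))"
    by (simp add: inner_add_right add_divide_distrib[symmetric] algebra_simps)
  then show ?thesis by (simp add: refl_hyp_def scaleR_left_distrib algebra_simps)
qed



definition monoP :: "('a::euclidean_space \<Rightarrow> real) \<Rightarrow> 'a set" where
  "monoP u = {v. \<forall>x t. 0 \<le> t \<longrightarrow> u x \<le> u (x + t *\<^sub>R v)}"

definition symb :: "('a::euclidean_space \<Rightarrow> real) \<Rightarrow> 'a \<Rightarrow> real \<Rightarrow> bool" where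
  "symb u e b \<longleftrightarrow> (\<forall>x. u (refl_hyp e b x) = u x)"

definition symd :: "('a::euclidean_space \<Rightarrow> real) \<Rightarrow> 'a \<Rightarrow> bool" where
  "symd u e \<longleftrightarrow> (\<exists>b. symb u e b)"

lemma refl_on_hyp: "e \<bullet> x = b \<Longrightarrow> refl_hyp e b x = x"
  by (simp add: refl_hyp_def)

lemma sym_half:
  assumes e: "e \<noteq> 0" and h: "\<And>x. e \<bullet> x > b \<Longrightarrow> u (refl_hyp e b x) = u x"
  shows "symb u e b"
  unfolding symb_def
proof
  fix x
  consider "e \<bullet> x > b" | "e \<bullet> x = b" | "e \<bullet> x < b" by linarith
  then show "u (refl_hyp e b x) = u x"
  proof cases
    case 1 then show ?thesis using h by blast
  next
    case 2 then show ?thesis by (simp add: refl_on_hyp)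
  next
    case 3
    let ?y = "refl_hyp e b x"
    have "e \<bullet> ?y > b" using 3 refl_inner[OF e] by simp
    then have "u (refl_hyp e b ?y) = u ?y" using h by blast
    then show ?thesis using refl_invol[OF e] by simp
  qed
qed

lemma refl_shift:
  assumes e: "e \<noteq> 0" and t: "t > 0"
  shows "refl_hyp e (e \<bullet> x + t * (e \<bullet> e) / 2) (x + t *\<^sub>R e) = x"
    and "e \<bullet> (x + t *\<^sub>R e) > e \<bullet> x + t * (e \<bullet> e) / 2"
proof -
  have ee: "e \<bullet> e > 0" using e by simp
  have "2 * (e \<bullet> (x + t *\<^sub>R e) - (e \<bullet> x + t * (e \<bullet> e) / 2)) / (e \<bullet> e) = t"
    using ee by (simp add: inner_add_right field_simps)
  then show "refl_hyp e (e \<bullet> x + t * (e \<bullet> e) / 2) (x + t *\<^sub>R e) = x"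
    by (simp add: refl_hyp_def)
  show "e \<bullet> (x + t *\<^sub>R e) > e \<bullet> x + t * (e \<bullet> e) / 2"
    using ee t by (simp add: inner_add_right)
qed

lemma dichotomy:
  fixes u :: "'a::euclidean_space \<Rightarrow> real"
  assumes cont: "continuous_on UNIV u" and sep: "separable u" and e: "e \<noteq> 0"
  shows "symd u e \<or> e \<in> monoP u \<or> -e \<in> monoP u"
proof -
  define Sp where "Sp = {b. \<forall>x. e \<bullet> x > b \<longrightarrow> u (refl_hyp e b x) \<le> u x}"
  define Sm where "Sm = {b. \<forall>x. e \<bullet> x > b \<longrightarrow> u (refl_hyp e b x) \<ge> u x}"
  have cr: "continuous_on UNIV (\<lambda>b. u (refl_hyp e b x))" for x
  proof -
    have "continuous_on UNIV (\<lambda>b. refl_hyp e b x)" unfolding refl_hyp_def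
      using e by (intro continuous_intros) auto
    then show ?thesis using continuous_on_compose2[OF cont] by blast
  qed
  have Sp_eq: "Sp = (\<Inter>x. {b. b \<le> e \<bullet> x} \<inter> {b. u (refl_hyp e b x) \<le> u x} \<union> {b. e \<bullet> x \<le> b})"
    unfolding Sp_def by (auto simp: not_less)
  have Sm_eq: "Sm = (\<Inter>x. {b. b \<le> e \<bullet> x} \<inter> {b. u x \<le> u (refl_hyp e b x)} \<union> {b. e \<bullet> x \<le> b})"
    unfolding Sm_def by (auto simp: not_less)
  have clSp: "closed Sp" unfolding Sp_eq
    by (intro closed_INT ballI closed_Un closed_Int closed_Collect_le cr continuous_intros)
  have clSm: "closed Sm" unfolding Sm_eq
    by (intro closed_INT ballI closed_Un closed_Int closed_Collect_le cr continuous_intros)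
  have cov: "UNIV \<subseteq> Sp \<union> Sm"
  proof
    fix b :: real
    from sep e have "(\<forall>x\<in>{x. e \<bullet> x > b}. u x \<ge> u (refl_hyp e b x)) \<or> (\<forall>x\<in>{x. e \<bullet> x > b}. u x \<le> u (refl_hyp e b x))"
      unfolding separable_def Let_def by blast
    then show "b \<in> Sp \<union> Sm" unfolding Sp_def Sm_def by auto
  qed
  show ?thesis
  proof (cases "Sp \<inter> Sm = {}")
    case False
    then obtain b where "b \<in> Sp" "b \<in> Sm" by blast
    then have "symb u e b" by (intro sym_half[OF e]) (auto simp: Sp_def Sm_def intro: order_antisym)
    then show ?thesis unfolding symd_def by blast
  next
    case True
    have "\<not> (Sp \<noteq> {} \<and> Sm \<noteq> {})"
      using connected_closed[of "UNIV::real set"] connected_UNIV clSp clSm cov True by blast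
    then consider "Sm = {}" | "Sp = {}" by blast
    then show ?thesis
    proof cases
      case 1
      then have all: "b \<in> Sp" for b using cov by blast
      have "e \<in> monoP u" unfolding monoP_def
      proof (intro CollectI allI impI)
        fix x and t :: real assume "0 \<le> t"
        show "u x \<le> u (x + t *\<^sub>R e)"
        proof (cases "t = 0")
          case False
          then have t: "t > 0" using \<open>0 \<le> t\<close> by simp
          from all[of "e \<bullet> x + t * (e \<bullet> e) / 2"] refl_shift[OF e t, of x]
          show ?thesis unfolding Sp_def by auto
        qed simp
      qed
      then show ?thesis by blast
    next
      case 2
      then have all: "b \<in> Sm" for b using cov by blast
      have "-e \<in> monoP u" unfolding monoP_def
      proof (intro CollectI allI impI)
        fix x and t :: real assume "0 \<le> t"
        show "u x \<le> u (x + t *\<^sub>R - e)"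
        proof (cases "t = 0")
          case False
          then have t: "t > 0" using \<open>0 \<le> t\<close> by simp
          from all[of "e \<bullet> (x - t *\<^sub>R e) + t * (e \<bullet> e) / 2"] refl_shift[OF e t, of "x - t *\<^sub>R e"]
          show ?thesis unfolding Sm_def by auto
        qed simp
      qed
      then show ?thesis by blast
    qed
  qed
qed

lemma monoP_add: "v \<in> monoP u \<Longrightarrow> w \<in> monoP u \<Longrightarrow> v + w \<in> monoP u"
  unfolding monoP_def
proof (intro CollectI allI impI, goal_cases)
  case (1 x t)
  then have "u x \<le> u (x + t *\<^sub>R v)" by blast
  also have "\<dots> \<le> u ((x + t *\<^sub>R v) + t *\<^sub>R w)" using 1 by blast
  finally show ?case by (simp add: algebra_simps)
qed

lemma monoP_scale: "v \<in> monoP u \<Longrightarrow> 0 \<le> c \<Longrightarrow> c *\<^sub>R v \<in> monoP u"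
  unfolding monoP_def by (auto simp: scaleR_scaleR)

lemma monoP_zero: "0 \<in> monoP u"
  unfolding monoP_def by auto

lemma monoP_closed:
  assumes cont: "continuous_on UNIV u"
  shows "closed (monoP u)"
proof -
  have "monoP u = (\<Inter>x. \<Inter>t\<in>{0..}. {v. u x \<le> u (x + t *\<^sub>R v)})"
    unfolding monoP_def by auto
  moreover have "closed {v. u x \<le> u (x + t *\<^sub>R v)}" for x t
  proof -
    have "continuous_on UNIV (\<lambda>v. x + t *\<^sub>R v)" by (intro continuous_intros)
    then have "continuous_on UNIV (\<lambda>v. u (x + t *\<^sub>R v))" using continuous_on_compose2[OF cont] by blast
    then show ?thesis by (intro closed_Collect_le continuous_intros)
  qed
  ultimately show ?thesis by (simp add: closed_INT)
qed

lemma monoP_lin: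
  assumes "v \<in> monoP u" "-v \<in> monoP u"
  shows "u (x + s *\<^sub>R v) = u x"
proof (cases "s \<ge> 0")
  case True
  have "u x \<le> u (x + s *\<^sub>R v)" using assms(1) True unfolding monoP_def by blast
  moreover have "u (x + s *\<^sub>R v) \<le> u ((x + s *\<^sub>R v) + s *\<^sub>R (-v))" using assms(2) True unfolding monoP_def by blast
  ultimately show ?thesis by simp
next
  case False
  have h1: "\<forall>x t. 0 \<le> t \<longrightarrow> u x \<le> u (x + t *\<^sub>R (-v))" using assms(2) unfolding monoP_def by blast
  have h2: "\<forall>x t. 0 \<le> t \<longrightarrow> u x \<le> u (x + t *\<^sub>R v)" using assms(1) unfolding monoP_def by blast
  have "u x \<le> u (x + (-s) *\<^sub>R (-v))" using h1[rule_format, of "-s" x] False by simp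
  moreover have "u (x + s *\<^sub>R v) \<le> u ((x + s *\<^sub>R v) + (-s) *\<^sub>R v)" using h2[rule_format, of "-s" "x + s *\<^sub>R v"] False by simp
  ultimately show ?thesis by simp
qed

lemma sym_monoP:
  assumes e: "e \<noteq> 0" and s: "symb u e b" and v: "v \<in> monoP u"
  shows "(v - (2*(e \<bullet> v)/(e \<bullet> e)) *\<^sub>R e) \<in> monoP u"
  unfolding monoP_def
proof (intro CollectI allI impI)
  fix x and t :: real assume t: "0 \<le> t"
  let ?R = "\<lambda>v. v - (2*(e \<bullet> v)/(e \<bullet> e)) *\<^sub>R e"
  have RR: "?R (t *\<^sub>R ?R v) = t *\<^sub>R v" using e
    by (simp add: inner_diff_right algebra_simps scaleR_diff_right)
  have "u x = u (refl_hyp e b x)" using s unfolding symb_def by simp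
  also have "\<dots> \<le> u (refl_hyp e b x + t *\<^sub>R v)" using v t unfolding monoP_def by blast
  also have "refl_hyp e b x + t *\<^sub>R v = refl_hyp e b (x + t *\<^sub>R ?R v)"
    using refl_add[of e b x "t *\<^sub>R ?R v"] RR by simp
  also have "u \<dots> = u (x + t *\<^sub>R ?R v)" using s unfolding symb_def by simp
  finally show "u x \<le> u (x + t *\<^sub>R ?R v)" .
qed



lemma trig_cos: "cos (2*t + pi - p) = cos p - 2 * (cos t * cos p + sin t * sin p) * cos t"
proof -
  have c2: "cos (2*t) = 2*(cos t)^2 - 1" by (simp add: cos_double_sin cos_squared_eq) 
  have s2: "sin (2*t) = 2 * sin t * cos t" by (simp add: sin_double)
  have "cos (2*t + pi - p) = - cos (2*t - p)" by (simp add: cos_diff sin_diff)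
  also have "\<dots> = - (cos (2*t) * cos p + sin (2*t) * sin p)" by (simp add: cos_diff)
  also have "\<dots> = cos p - 2 * (cos t * cos p + sin t * sin p) * cos t"
    unfolding c2 s2 by (simp add: algebra_simps power2_eq_square)
  finally show ?thesis .
qed

lemma trig_sin: "sin (2*t + pi - p) = sin p - 2 * (cos t * cos p + sin t * sin p) * sin t"
proof -
  have c2: "cos (2*t) = 1 - 2*(sin t)^2" by (simp add: cos_double_sin)
  have s2: "sin (2*t) = 2 * sin t * cos t" by (simp add: sin_double)
  have "sin (2*t + pi - p) = - sin (2*t - p)" by (simp add: cos_diff sin_diff)
  also have "\<dots> = - (sin (2*t) * cos p - cos (2*t) * sin p)" by (simp add: sin_diff)
  also have "\<dots> = sin p - 2 * (cos t * cos p + sin t * sin p) * sin t"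
    unfolding c2 s2 by (simp add: algebra_simps power2_eq_square)
  finally show ?thesis .
qed

lemma rot_lin:
  fixes d w :: "'a::euclidean_space"
  assumes dd: "d \<bullet> d = 1" and ww: "w \<bullet> w = 1" and dw: "d \<bullet> w = 0"
  defines "E \<equiv> \<lambda>t. cos t *\<^sub>R d + sin t *\<^sub>R w"
  shows "E t \<bullet> E p = cos t * cos p + sin t * sin p"
    and "E t \<bullet> E t = 1"
    and "E p - (2 * (E t \<bullet> E p) / (E t \<bullet> E t)) *\<^sub>R E t = E (2*t + pi - p)"
proof -
  have wd: "w \<bullet> d = 0" using dw by (simp add: inner_commute)
  show ip: "E t \<bullet> E p = cos t * cos p + sin t * sin p" for t p
    unfolding E_def by (simp add: inner_add_left inner_add_right dd ww dw wd)
  show tt: "E t \<bullet> E t = 1" for t using ip[of t t] sin_cos_squared_add[of t]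
    by (simp add: power2_eq_square)
  show "E p - (2 * (E t \<bullet> E p) / (E t \<bullet> E t)) *\<^sub>R E t = E (2*t + pi - p)"
    unfolding tt ip unfolding E_def trig_cos trig_sin
    by (simp add: algebra_simps scaleR_diff_left)
qed

lemma rot_main:
  fixes u :: "'a::euclidean_space \<Rightarrow> real" and d w :: 'a
  assumes cont: "continuous_on UNIV u" and sep: "separable u"
    and dP: "d \<in> monoP u" and ndP: "-d \<notin> monoP u"
    and dd: "d \<bullet> d = 1" and ww: "w \<bullet> w = 1" and dw: "d \<bullet> w = 0"
  shows "\<exists>t. 0 < t \<and> t < pi \<and> cos t *\<^sub>R d + sin t *\<^sub>R w \<in> monoP u \<and> - (cos t *\<^sub>R d + sin t *\<^sub>R w) \<in> monoP u"
proof (rule ccontr)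
  assume H: "\<not> ?thesis"
  define E where "E \<equiv> \<lambda>t. cos t *\<^sub>R d + sin t *\<^sub>R w"
  have rl2: "E t \<bullet> E t = 1" for t unfolding E_def using rot_lin(2)[OF dd ww dw] by simp
  have rl3: "E p - (2 * (E t \<bullet> E p) / (E t \<bullet> E t)) *\<^sub>R E t = E (2*t + pi - p)" for t p
    unfolding E_def using rot_lin(3)[OF dd ww dw] by simp
  define P where "P = monoP u"
  have clP: "closed P" unfolding P_def using monoP_closed[OF cont] .
  have contE: "continuous_on UNIV E" unfolding E_def by (intro continuous_intros)
  define A where "A = E -` P"
  define B where "B = (\<lambda>t. - E t) -` P"
  have clA: "closed A" unfolding A_def by (rule closed_vimage[OF clP contE])
  have clB: "closed B" unfolding B_def by (rule closed_vimage[OF clP]) (intro continuous_intros contE)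
  have E0: "E 0 = d" and Epi: "E pi = -d" unfolding E_def by simp_all
  have disj: "A \<inter> B \<inter> {0..pi} = {}"
  proof (safe)
    fix t assume "t \<in> A" "t \<in> B" "t \<in> {0..pi}"
    then have tA: "E t \<in> P" and tB: "- E t \<in> P" and t: "0 \<le> t" "t \<le> pi"
      unfolding A_def B_def by auto
    show "t \<in> {}"
    proof (cases "t = 0 \<or> t = pi")
      case True
      then show ?thesis using tA tB E0 Epi ndP unfolding P_def by auto
    next
      case False
      then have "0 < t" "t < pi" using t by auto
      then show ?thesis using H tA tB unfolding E_def P_def by blast
    qed
  qed
  have "0 \<in> A \<inter> {0..pi}" unfolding A_def using E0 dP P_def by simp
  moreover have "pi \<in> B \<inter> {0..pi}" unfolding B_def using Epi dP P_def by simp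
  ultimately have "\<not> {0..pi} \<subseteq> A \<union> B"
    using connected_closed[of "{0..pi::real}"] connected_Icc clA clB disj by blast
  then obtain t0 where t0: "t0 \<notin> A \<union> B" by blast
  have "open (- (A \<union> B))" using clA clB by auto
  then obtain \<epsilon> where \<epsilon>: "\<epsilon> > 0" "ball t0 \<epsilon> \<subseteq> - (A \<union> B)"
    using t0 open_contains_ball by blast
  have symE: "symd u (E t)" if "dist t0 t < \<epsilon>" for t
  proof -
    have "t \<notin> A \<union> B" using \<epsilon> that by auto
    then have "E t \<notin> monoP u" "- E t \<notin> monoP u" unfolding A_def B_def P_def by auto
    moreover have "E t \<noteq> 0" using rl2[of t] by auto
    ultimately show ?thesis using dichotomy[OF cont sep] by blast
  qed
  obtain m :: nat where m: "pi / (2 * \<epsilon>) < real m" using reals_Archimedean2 by blast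
  have mpos: "real m > 0" using m \<epsilon> pi_gt_zero
    by (smt (verit, best) divide_pos_pos)
  define \<delta> where "\<delta> = pi / (2 * real m)"
  have \<delta>: "\<delta> < \<epsilon>" unfolding \<delta>_def using m mpos \<epsilon>(1)
    by (simp add: field_simps)
  have \<delta>0: "\<delta> > 0" unfolding \<delta>_def using mpos by simp
  have "symd u (E t0)" using symE \<epsilon> by simp
  then obtain b1 where b1: "symb u (E t0) b1" unfolding symd_def by blast
  have "symd u (E (t0 + \<delta>))" using symE \<delta> \<delta>0 by (simp add: dist_real_def)
  then obtain b2 where b2: "symb u (E (t0 + \<delta>)) b2" unfolding symd_def by blast
  have step: "E p \<in> P \<Longrightarrow> E (p + pi / real m) \<in> P" for p
  proof -
    assume "E p \<in> P"
    then have "E (2*t0 + pi - p) \<in> P"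
      using sym_monoP[OF _ b1, of "E p"] rl2[of t0] rl3[of p t0] unfolding P_def by force
    then have "E (2*(t0+\<delta>) + pi - (2*t0 + pi - p)) \<in> P"
      using sym_monoP[OF _ b2, of "E (2*t0 + pi - p)"] rl2[of "t0+\<delta>"] rl3[of "2*t0 + pi - p" "t0+\<delta>"]
      unfolding P_def by force
    moreover have "2*(t0+\<delta>) + pi - (2*t0 + pi - p) = p + pi / real m"
      unfolding \<delta>_def using mpos by (simp add: field_simps)
    ultimately show ?thesis by (simp add: add.commute)
  qed
  have "E (real k * (pi / real m)) \<in> P" for k :: nat
  proof (induction k)
    case 0 then show ?case using E0 dP P_def by simp
  next
    case (Suc k)
    have "real (Suc k) * (pi / real m) = real k * (pi / real m) + pi / real m"
      by (simp add: algebra_simps add_divide_distrib)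
    then show ?case using step[OF Suc] by simp
  qed
  from this[of m] have "E pi \<in> P" using mpos by simp
  then show False using Epi ndP P_def by simp
qed



definition LinS :: "('a::euclidean_space \<Rightarrow> real) \<Rightarrow> 'a set" where
  "LinS u = {v. v \<in> monoP u \<and> -v \<in> monoP u}"

lemma LinS_add: "v \<in> LinS u \<Longrightarrow> w \<in> LinS u \<Longrightarrow> v + w \<in> LinS u"
  unfolding LinS_def using monoP_add[of "-v" u "-w"] monoP_add[of v u w] by (auto simp: add.commute)

lemma LinS_scale: "v \<in> LinS u \<Longrightarrow> c *\<^sub>R v \<in> LinS u"
proof -
  assume v: "v \<in> LinS u"
  show ?thesis
  proof (cases "c \<ge> 0")
    case True then show ?thesis using v monoP_scale[of v u c] monoP_scale[of "-v" u c]
      unfolding LinS_def by auto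
  next
    case False then show ?thesis using v monoP_scale[of v u "-c"] monoP_scale[of "-v" u "-c"]
      unfolding LinS_def by auto
  qed
qed

lemma LinS_sum: "finite F \<Longrightarrow> (\<And>i. i \<in> F \<Longrightarrow> f i \<in> LinS u) \<Longrightarrow> sum f F \<in> LinS u"
proof (induction F rule: finite_induct)
  case empty then show ?case using monoP_zero by (simp add: LinS_def)
next
  case (insert x F) then show ?case by (simp add: LinS_add)
qed

lemma LinS_inv: "v \<in> LinS u \<Longrightarrow> u (x + v) = u x"
  using monoP_lin[of v u x 1] unfolding LinS_def by simp

lemma main_n:
  fixes u :: "'a::euclidean_space \<Rightarrow> real"
  assumes cont: "continuous_on UNIV u" and sep: "separable u"
    and e: "e \<noteq> 0" and ns: "\<not> symd u e"
  shows "\<exists>n. n \<noteq> 0 \<and> (\<forall>x y. n \<bullet> x = n \<bullet> y \<longrightarrow> u x = u y)"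
proof -
  obtain d0 where d0: "d0 \<in> monoP u" "d0 = e \<or> d0 = -e"
    using dichotomy[OF cont sep e] ns by blast
  have d00: "d0 \<noteq> 0" using d0(2) e by auto
  define d where "d = (1 / norm d0) *\<^sub>R d0"
  have dP: "d \<in> monoP u" unfolding d_def by (rule monoP_scale[OF d0(1)]) simp
  have dd: "d \<bullet> d = 1" unfolding d_def using d00
    by (simp add: inner_commute power2_norm_eq_inner[symmetric] field_simps)
  have ed: "e = (if d0 = e then norm d0 else - norm d0) *\<^sub>R d"
    unfolding d_def using d00 d0(2) by auto
  have ndP: "-d \<notin> monoP u"
  proof
    assume "-d \<in> monoP u"
    then have inv: "u (x + s *\<^sub>R d) = u x" for x s using monoP_lin[OF dP] by blast
    have "symb u e 0" unfolding symb_def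
    proof
      fix x
      have "refl_hyp e 0 x = x + (- (2 * (e \<bullet> x - 0) / (e \<bullet> e)) * (if d0 = e then norm d0 else - norm d0)) *\<^sub>R d"
        unfolding refl_hyp_def by (subst (3) ed) (simp add: scaleR_scaleR)
      then obtain k where "refl_hyp e 0 x = x + k *\<^sub>R d" by blast
      then show "u (refl_hyp e 0 x) = u x" using inv[of x k] by simp
    qed
    then show False using ns unfolding symd_def by blast
  qed
  have dLin: "d \<notin> LinS u" using ndP unfolding LinS_def by blast
  have perp: "\<exists>c. w + c *\<^sub>R d \<in> LinS u" if wd: "w \<bullet> d = 0" for w
  proof (cases "w = 0")
    case True then show ?thesis using LinS_scale[of 0 u] monoP_zero
      by (intro exI[of _ 0]) (simp add: LinS_def)
  next
    case False
    define w' where "w' = (1 / norm w) *\<^sub>R w"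
    have ww: "w' \<bullet> w' = 1" unfolding w'_def using False
      by (simp add: inner_commute power2_norm_eq_inner[symmetric] field_simps)
    have dw: "d \<bullet> w' = 0" unfolding w'_def using wd by (simp add: inner_commute)
    obtain t where t: "0 < t" "t < pi" "cos t *\<^sub>R d + sin t *\<^sub>R w' \<in> monoP u"
      "- (cos t *\<^sub>R d + sin t *\<^sub>R w') \<in> monoP u"
      using rot_main[OF cont sep dP ndP dd ww dw] by blast
    have st: "sin t > 0" using t sin_gt_zero by blast
    have "(norm w / sin t) *\<^sub>R (cos t *\<^sub>R d + sin t *\<^sub>R w') \<in> LinS u"
      using t by (intro LinS_scale) (simp add: LinS_def)
    moreover have "(norm w / sin t) *\<^sub>R (cos t *\<^sub>R d + sin t *\<^sub>R w') = w + (norm w * cos t / sin t) *\<^sub>R d"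
      unfolding w'_def using st False by (simp add: scaleR_add_right scaleR_scaleR add.commute)
    ultimately show ?thesis by auto
  qed
  define c where "c = (\<lambda>i. SOME c. (i - (i \<bullet> d) *\<^sub>R d) + c *\<^sub>R d \<in> LinS u)"
  have c: "(i - (i \<bullet> d) *\<^sub>R d) + c i *\<^sub>R d \<in> LinS u" for i
  proof -
    have "(i - (i \<bullet> d) *\<^sub>R d) \<bullet> d = 0" using dd by (simp add: inner_diff_left)
    then have "\<exists>c. (i - (i \<bullet> d) *\<^sub>R d) + c *\<^sub>R d \<in> LinS u" by (rule perp)
    then show ?thesis unfolding c_def by (rule someI_ex)
  qed
  define \<phi> where "\<phi> = (\<lambda>i. i \<bullet> d - c i)"
  have phi: "i - \<phi> i *\<^sub>R d \<in> LinS u" for i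
  proof -
    have "i - \<phi> i *\<^sub>R d = (i - (i \<bullet> d) *\<^sub>R d) + c i *\<^sub>R d"
      unfolding \<phi>_def by (simp add: algebra_simps)
    then show ?thesis using c[of i] by metis
  qed
  define n where "n = (\<Sum>i\<in>Basis. \<phi> i *\<^sub>R i)"
  have decomp: "x - (n \<bullet> x) *\<^sub>R d \<in> LinS u" for x
  proof -
    have nx: "n \<bullet> x = (\<Sum>i\<in>Basis. (x \<bullet> i) * \<phi> i)"
      unfolding n_def by (simp add: inner_sum_left inner_commute[of x] mult.commute)
    have "(\<Sum>i\<in>Basis. (x \<bullet> i) *\<^sub>R (i - \<phi> i *\<^sub>R d)) = (\<Sum>i\<in>Basis. (x \<bullet> i) *\<^sub>R i) - (\<Sum>i\<in>Basis. ((x \<bullet> i) * \<phi> i) *\<^sub>R d)"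
      by (simp add: scaleR_diff_right sum_subtractf scaleR_scaleR)
    also have "\<dots> = x - (n \<bullet> x) *\<^sub>R d"
      unfolding nx euclidean_representation by (simp add: scaleR_sum_left)
    finally have eq: "(\<Sum>i\<in>Basis. (x \<bullet> i) *\<^sub>R (i - \<phi> i *\<^sub>R d)) = x - (n \<bullet> x) *\<^sub>R d" .
    have "(\<Sum>i\<in>Basis. (x \<bullet> i) *\<^sub>R (i - \<phi> i *\<^sub>R d)) \<in> LinS u"
      by (intro LinS_sum LinS_scale phi) simp
    then show ?thesis unfolding eq .
  qed
  have n0: "n \<noteq> 0"
  proof
    assume "n = 0"
    then show False using decomp[of d] dLin by simp
  qed
  have "u x = u y" if "n \<bullet> x = n \<bullet> y" for x y
  proof -
    have "(x - (n \<bullet> x) *\<^sub>R d) + (- (y - (n \<bullet> y) *\<^sub>R d)) \<in> LinS u"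
      using decomp[of x] LinS_scale[OF decomp[of y], of "-1"] by (intro LinS_add) auto
    then have "x - y \<in> LinS u" using that by simp
    then have "u (y + (x - y)) = u y" by (rule LinS_inv)
    then show ?thesis by simp
  qed
  then show ?thesis using n0 by blast
qed



lemma per_sym:
  fixes u :: "'a::euclidean_space \<Rightarrow> real"
  assumes sep: "separable u" and e: "e \<noteq> 0" and k0: "\<kappa> \<noteq> 0"
    and tr0: "\<And>x. u (x + \<kappa> *\<^sub>R e) = u x"
  shows "symb u e b"
proof -
  define k where "k = \<bar>\<kappa>\<bar>"
  have k: "k > 0" unfolding k_def using k0 by simp
  have tr: "u (x + k *\<^sub>R e) = u x" for x
  proof (cases "\<kappa> > 0")
    case True then show ?thesis unfolding k_def using tr0 by simp
  next
    case False
    then have "k = - \<kappa>" unfolding k_def by simp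
    then show ?thesis using tr0[of "x + k *\<^sub>R e"] by simp
  qed
  have trm: "u (x + (real m * k) *\<^sub>R e) = u x" for m :: nat and x
  proof (induction m arbitrary: x)
    case 0 then show ?case by simp
  next
    case (Suc m)
    have "u (x + (real (Suc m) * k) *\<^sub>R e) = u ((x + (real m * k) *\<^sub>R e) + k *\<^sub>R e)"
      by (simp add: algebra_simps)
    also have "\<dots> = u (x + (real m * k) *\<^sub>R e)" by (rule tr)
    also have "\<dots> = u x" by (rule Suc.IH)
    finally show ?case .
  qed
  have trm': "u (x - (real m * k) *\<^sub>R e) = u x" for m :: nat and x
    using trm[where m=m and x="x - (real m * k) *\<^sub>R e"] by simp
  have ee: "e \<bullet> e > 0" using e by simp
  have key: "\<exists>m::nat. refl_hyp e b (refl_hyp e b x + (real m * k) *\<^sub>R e) = x - (real m * k) *\<^sub>R e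
      \<and> e \<bullet> (refl_hyp e b x + (real m * k) *\<^sub>R e) > b" for x
  proof -
    obtain m :: nat where m: "(e \<bullet> x - b) / (k * (e \<bullet> e)) < real m" using reals_Archimedean2 by blast
    have "e \<bullet> x - b < real m * k * (e \<bullet> e)" using m k ee by (simp add: field_simps)
    then have "e \<bullet> (refl_hyp e b x + (real m * k) *\<^sub>R e) > b"
      using refl_inner[OF e, of b x] by (simp add: inner_add_right)
    moreover have "refl_hyp e b (refl_hyp e b x + (real m * k) *\<^sub>R e) = x - (real m * k) *\<^sub>R e"
    proof -
      have cc: "2 * (e \<bullet> ((real m * k) *\<^sub>R e)) / (e \<bullet> e) = 2 * (real m * k)" using ee by simp
      have "(real m * k) *\<^sub>R e - (2 * (e \<bullet> ((real m * k) *\<^sub>R e)) / (e \<bullet> e)) *\<^sub>R e = - ((real m * k) *\<^sub>R e)"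
        unfolding cc by (simp add: scaleR_diff_left[symmetric])
      then show ?thesis using refl_add[of e b "refl_hyp e b x" "(real m * k) *\<^sub>R e"] refl_invol[OF e] by simp
    qed
    ultimately show ?thesis by blast
  qed
  from sep e have "(\<forall>x\<in>{x. e \<bullet> x > b}. u x \<ge> u (refl_hyp e b x)) \<or> (\<forall>x\<in>{x. e \<bullet> x > b}. u x \<le> u (refl_hyp e b x))"
    unfolding separable_def Let_def by blast
  then have "u (refl_hyp e b x) = u x" if "e \<bullet> x > b" for x
  proof
    assume A: "\<forall>x\<in>{x. e \<bullet> x > b}. u x \<ge> u (refl_hyp e b x)"
    obtain m :: nat where m: "refl_hyp e b (refl_hyp e b x + (real m * k) *\<^sub>R e) = x - (real m * k) *\<^sub>R e"
      "e \<bullet> (refl_hyp e b x + (real m * k) *\<^sub>R e) > b" using key by blast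
    have "u (x - (real m * k) *\<^sub>R e) \<le> u (refl_hyp e b x + (real m * k) *\<^sub>R e)"
      using A m by force
    then have "u x \<le> u (refl_hyp e b x)" using trm trm' by simp
    moreover have "u (refl_hyp e b x) \<le> u x" using A that by blast
    ultimately show ?thesis by simp
  next
    assume A: "\<forall>x\<in>{x. e \<bullet> x > b}. u x \<le> u (refl_hyp e b x)"
    obtain m :: nat where m: "refl_hyp e b (refl_hyp e b x + (real m * k) *\<^sub>R e) = x - (real m * k) *\<^sub>R e"
      "e \<bullet> (refl_hyp e b x + (real m * k) *\<^sub>R e) > b" using key by blast
    have "u (x - (real m * k) *\<^sub>R e) \<ge> u (refl_hyp e b x + (real m * k) *\<^sub>R e)"
      using A m by force
    then have "u x \<ge> u (refl_hyp e b x)" using trm trm' by simp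
    moreover have "u (refl_hyp e b x) \<ge> u x" using A that by blast
    ultimately show ?thesis by simp
  qed
  then show ?thesis by (rule sym_half[OF e])
qed

lemma const_radial: "(\<And>x y. u x = u y) \<Longrightarrow> radially_symmetric u xs"
  unfolding radially_symmetric_def by (intro exI[of _ "\<lambda>_. u xs"]) auto

lemma radial_case:
  fixes u :: "'a::euclidean_space \<Rightarrow> real"
  assumes sep: "separable u" and allsym: "\<And>e. e \<noteq> 0 \<Longrightarrow> symd u e"
  shows "\<exists>xs. radially_symmetric u xs"
proof -
  define c where "c = (\<lambda>i. SOME b. symb u i b)"
  have c: "symb u i (c i)" if "i \<in> Basis" for i
    unfolding c_def using allsym[of i] that by (simp add: symd_def someI_ex nonzero_Basis)
  define xs where "xs = (\<Sum>i\<in>Basis. c i *\<^sub>R i)"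
  have comp: "finite F \<Longrightarrow> F \<subseteq> Basis \<Longrightarrow> u (x - 2 *\<^sub>R (\<Sum>i\<in>F. (x \<bullet> i - c i) *\<^sub>R i)) = u x" for F x
  proof (induction F rule: finite_induct)
    case empty then show ?case by simp
  next
    case (insert j F)
    then have j: "j \<in> Basis" and F: "F \<subseteq> Basis" by auto
    define y where "y = x - 2 *\<^sub>R (\<Sum>i\<in>F. (x \<bullet> i - c i) *\<^sub>R i)"
    have "j \<bullet> (\<Sum>i\<in>F. (x \<bullet> i - c i) *\<^sub>R i) = 0"
      unfolding inner_sum_right
    proof (intro sum.neutral ballI)
      fix i assume "i \<in> F"
      then have "i \<in> Basis" "i \<noteq> j" using F insert(2) by auto
      then show "j \<bullet> ((x \<bullet> i - c i) *\<^sub>R i) = 0" using j by (simp add: inner_Basis)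
    qed
    then have jy: "j \<bullet> y = j \<bullet> x" unfolding y_def by (simp add: inner_diff_right)
    have jj: "j \<bullet> j = 1" using j by simp
    have "refl_hyp j (c j) y = x - 2 *\<^sub>R (\<Sum>i\<in>insert j F. (x \<bullet> i - c i) *\<^sub>R i)"
      unfolding refl_hyp_def jy jj using insert(1,2)
      by (simp add: y_def inner_commute[of j x] algebra_simps scaleR_add_right)
    moreover have "u (refl_hyp j (c j) y) = u y" using c[OF j] unfolding symb_def by simp
    moreover have "u y = u x" unfolding y_def using insert F by auto
    ultimately show ?case by simp
  qed
  have psi: "u (2 *\<^sub>R xs - x) = u x" for x
  proof -
    have sumeq: "(\<Sum>i\<in>Basis. (x \<bullet> i - c i) *\<^sub>R i) = x - xs"
      unfolding xs_def by (simp add: scaleR_diff_left sum_subtractf euclidean_representation)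
    have "u (x - 2 *\<^sub>R (x - xs)) = u x" using comp[of Basis x] finite_Basis unfolding sumeq by simp
    moreover have "x - 2 *\<^sub>R (x - xs) = 2 *\<^sub>R xs - x" by (simp add: algebra_simps scaleR_2)
    ultimately show ?thesis by simp
  qed
  have symc: "symb u e (e \<bullet> xs)" if e: "e \<noteq> 0" for e
  proof -
    obtain b where b: "symb u e b" using allsym[OF e] unfolding symd_def by blast
    define b' where "b' = 2 * (e \<bullet> xs) - b"
    have eqr: "refl_hyp e b' x = 2 *\<^sub>R xs - refl_hyp e b (2 *\<^sub>R xs - x)" for x
    proof -
      have "2 * (e \<bullet> x - b') / (e \<bullet> e) = - (2 * (e \<bullet> (2 *\<^sub>R xs - x) - b) / (e \<bullet> e))"
        unfolding b'_def using e by (simp add: inner_diff_right field_simps)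
      then show ?thesis unfolding refl_hyp_def by (simp add: algebra_simps)
    qed
    have b': "symb u e b'" unfolding symb_def
    proof
      fix x
      have "u (refl_hyp e b' x) = u (refl_hyp e b (2 *\<^sub>R xs - x))" unfolding eqr psi ..
      also have "\<dots> = u (2 *\<^sub>R xs - x)" using b unfolding symb_def by simp
      also have "\<dots> = u x" by (rule psi)
      finally show "u (refl_hyp e b' x) = u x" .
    qed
    show ?thesis
    proof (cases "b = b'")
      case True
      then have "b = e \<bullet> xs" unfolding b'_def by simp
      then show ?thesis using b by simp
    next
      case False
      have ee: "e \<bullet> e > 0" using e by simp
      have trans: "refl_hyp e b' (refl_hyp e b x) = x + (2 * (b' - b) / (e \<bullet> e)) *\<^sub>R e" for x
      proof -
        have "refl_hyp e b' (refl_hyp e b x) = refl_hyp e b x - (2 * (2*b - e \<bullet> x - b') / (e \<bullet> e)) *\<^sub>R e"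
          using refl_inner[OF e] by (simp add: refl_hyp_def[of e b'])
        also have "\<dots> = x - ((2 * (e \<bullet> x - b) / (e \<bullet> e)) + (2 * (2*b - e \<bullet> x - b') / (e \<bullet> e))) *\<^sub>R e"
          by (simp add: refl_hyp_def scaleR_left_distrib)
        also have "(2 * (e \<bullet> x - b) / (e \<bullet> e)) + (2 * (2*b - e \<bullet> x - b') / (e \<bullet> e)) = - (2 * (b' - b) / (e \<bullet> e))"
          using ee by (simp add: field_simps)
        finally show ?thesis by simp
      qed
      have "u (x + (2 * (b' - b) / (e \<bullet> e)) *\<^sub>R e) = u x" for x
        using b b' unfolding symb_def trans[symmetric] by simp
      moreover have "2 * (b' - b) / (e \<bullet> e) \<noteq> 0" using False ee by simp
      ultimately show ?thesis using per_sym[OF sep e] by blast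
    qed
  qed
  have eqdist: "u x = u y" if "norm (x - xs) = norm (y - xs)" for x y
  proof (cases "x = y")
    case False
    define e where "e = x - y"
    have e: "e \<noteq> 0" unfolding e_def using False by simp
    define a where "a = x - xs"
    define b where "b = y - xs"
    have ab: "a \<bullet> a = b \<bullet> b" using that unfolding a_def b_def by (simp add: power2_norm_eq_inner[symmetric])
    have ea: "e = a - b" unfolding e_def a_def b_def by simp
    have num: "e \<bullet> x - e \<bullet> xs = a \<bullet> a - a \<bullet> b" unfolding ea a_def b_def
      by (simp add: inner_diff_left inner_diff_right inner_commute)
    have den: "e \<bullet> e = 2 * (a \<bullet> a - a \<bullet> b)" unfolding ea using ab
      by (simp add: inner_diff_left inner_diff_right inner_commute)
    have "e \<bullet> e \<noteq> 0" using e by simp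
    have eq2: "2 * (e \<bullet> x - e \<bullet> xs) = e \<bullet> e" unfolding num den by simp
    have "2 * (e \<bullet> x - e \<bullet> xs) / (e \<bullet> e) = 1" using eq2 divide_self[OF \<open>e \<bullet> e \<noteq> 0\<close>] by metis
    then have "refl_hyp e (e \<bullet> xs) x = x - e" unfolding refl_hyp_def by (simp only: scaleR_one)
    also have "x - e = y" unfolding e_def by simp
    finally have "refl_hyp e (e \<bullet> xs) x = y" .
    then show ?thesis using symc[OF e] unfolding symb_def by metis
  qed simp
  obtain i0 :: 'a where i0: "i0 \<in> Basis" using nonempty_Basis by blast
  have "radially_symmetric u xs" unfolding radially_symmetric_def
  proof (intro exI[of _ "\<lambda>r. u (xs + r *\<^sub>R i0)"] allI)
    fix x
    show "u x = u (xs + norm (x - xs) *\<^sub>R i0)"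
      using i0 by (intro eqdist) simp
  qed
  then show ?thesis by blast
qed



lemma line_dir:
  assumes "line_through p a = line_through q b"
  shows "\<exists>l. b = l *\<^sub>R a"
proof -
  have "q \<in> line_through q b" "q + b \<in> line_through q b" unfolding line_through_def
    by (auto intro!: exI[of _ 0] exI[of _ 1])
  then have "q \<in> line_through p a" "q + b \<in> line_through p a" using assms by auto
  then obtain t1 t2 where "q = p + t1 *\<^sub>R a" "q + b = p + t2 *\<^sub>R a" unfolding line_through_def by blast
  then have "b = (t2 - t1) *\<^sub>R a" by (simp add: algebra_simps)
  then show ?thesis by blast
qed

lemma line_same:
  assumes "y \<in> line_through x d"
  shows "line_through y d = line_through x d"
proof -
  obtain t0 where y: "y = x + t0 *\<^sub>R d" using assms unfolding line_through_def by auto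
  show ?thesis unfolding line_through_def y
  proof (safe)
    fix t show "\<exists>s. x + t0 *\<^sub>R d + t *\<^sub>R d = x + s *\<^sub>R d \<and> True"
      by (intro exI[of _ "t0 + t"]) (simp add: algebra_simps)
  next
    fix t show "\<exists>s. x + t *\<^sub>R d = x + t0 *\<^sub>R d + s *\<^sub>R d \<and> True"
      by (intro exI[of _ "t - t0"]) (simp add: algebra_simps)
  qed
qed

lemma line_scale:
  assumes "l \<noteq> 0"
  shows "line_through p (l *\<^sub>R n) = line_through p n"
  unfolding line_through_def
proof (safe)
  fix t show "\<exists>s. p + t *\<^sub>R l *\<^sub>R n = p + s *\<^sub>R n \<and> True" by (intro exI[of _ "t * l"]) simp
next
  fix t show "\<exists>s. p + t *\<^sub>R n = p + s *\<^sub>R l *\<^sub>R n \<and> True"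
    using assms by (intro exI[of _ "t / l"]) simp
qed

lemma in_line: "x \<in> line_through x d"
  unfolding line_through_def by (auto intro!: exI[of _ 0])

lemma exists_perp:
  fixes n :: "'a::euclidean_space"
  assumes "DIM('a) \<ge> 2"
  shows "\<exists>w. w \<noteq> 0 \<and> w \<bullet> n = 0"
proof -
  have "card (Basis :: 'a set) \<ge> 2" using assms by simp
  then obtain i j :: 'a where ij: "i \<in> Basis" "j \<in> Basis" "i \<noteq> j"
    by (metis One_nat_def card_le_Suc0_iff_eq finite_Basis not_less_eq_eq numeral_2_eq_2)
  show ?thesis
  proof (cases "n \<bullet> i = 0 \<and> n \<bullet> j = 0")
    case True
    then show ?thesis using ij by (intro exI[of _ i]) (auto simp: inner_commute nonzero_Basis)
  next
    case False
    define w where "w = (n \<bullet> j) *\<^sub>R i - (n \<bullet> i) *\<^sub>R j"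
    have "w \<bullet> i = n \<bullet> j" "w \<bullet> j = - (n \<bullet> i)" unfolding w_def using ij
      by (auto simp: inner_diff_left inner_Basis)
    then have "w \<noteq> 0" using False by auto
    moreover have "w \<bullet> n = 0" unfolding w_def by (simp add: inner_diff_left inner_commute[of i n] inner_commute[of j n])
    ultimately show ?thesis by blast
  qed
qed

lemma pt_n: "n \<noteq> 0 \<Longrightarrow> n \<bullet> ((s / (n \<bullet> n)) *\<^sub>R n) = s"
  by simp

lemma lemmaF:
  fixes u :: "'a::euclidean_space \<Rightarrow> real"
  assumes dim: "DIM('a) \<ge> 2" and cont: "continuous_on UNIV u" and sep: "separable u"
    and n: "n \<noteq> 0" and inv: "\<And>x y. n \<bullet> x = n \<bullet> y \<Longrightarrow> u x = u y"
    and sym: "\<And>x y. n \<bullet> x + n \<bullet> y = 2 * s0 \<Longrightarrow> u x = u y"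
  shows "u x = u y"
proof -
  obtain w where w: "w \<noteq> 0" "w \<bullet> n = 0" using exists_perp[OF dim] by blast
  define e where "e = n + w"
  have nn: "n \<bullet> n > 0" using n by simp
  have ww: "w \<bullet> w > 0" using w by simp
  have ne: "n \<bullet> e = n \<bullet> n" unfolding e_def using w by (simp add: inner_add_right inner_commute)
  have we: "w \<bullet> e = w \<bullet> w" unfolding e_def using w by (simp add: inner_add_right)
  have e0: "e \<noteq> 0" using ne nn by auto
  have ee: "e \<bullet> e > 0" using e0 by simp
  define pt where "pt = (\<lambda>s. (s / (n \<bullet> n)) *\<^sub>R n)"
  have npt: "n \<bullet> pt s = s" for s unfolding pt_def using n by simp
  have upt: "u z = u (pt (n \<bullet> z))" for z by (rule inv) (simp add: npt)
  consider "symd u e" | "e \<in> monoP u" | "-e \<in> monoP u" using dichotomy[OF cont sep e0] by blast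
  then show ?thesis
  proof cases
    case 1
    then obtain b where b: "symb u e b" unfolding symd_def by blast
    define s where "s = n \<bullet> x"
    define s' where "s' = n \<bullet> y"
    define \<tau> where "\<tau> = ((s - s') * (e \<bullet> e) / (2 * (n \<bullet> n)) - s + b) / (w \<bullet> w)"
    define z where "z = pt s + \<tau> *\<^sub>R w"
    have nz: "n \<bullet> z = s" unfolding z_def using w npt by (simp add: inner_add_right inner_commute)
    have ez: "e \<bullet> z = s + \<tau> * (w \<bullet> w)" unfolding z_def e_def pt_def using w n
      by (simp add: inner_add_right inner_add_left inner_commute)
    have "n \<bullet> refl_hyp e b z = s - 2 * (e \<bullet> z - b) * (n \<bullet> n) / (e \<bullet> e)"
      unfolding refl_hyp_def using nz ne by (simp add: inner_diff_right)
    also have "\<dots> = s'" unfolding ez \<tau>_def using ww nn ee by (simp add: field_simps)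
    finally have nr: "n \<bullet> refl_hyp e b z = s'" .
    have "u x = u z" by (rule inv) (simp add: nz s_def)
    also have "\<dots> = u (refl_hyp e b z)" using b unfolding symb_def by simp
    also have "\<dots> = u y" by (rule inv) (simp add: nr s'_def)
    finally show ?thesis .
  next
    case 2
    have mono: "u a \<le> u c" if "n \<bullet> a \<le> n \<bullet> c" for a c
    proof -
      define t where "t = (n \<bullet> c - n \<bullet> a) / (n \<bullet> n)"
      have "t \<ge> 0" unfolding t_def using that nn by simp
      then have "u a \<le> u (a + t *\<^sub>R e)" using 2 unfolding monoP_def by blast
      also have "u (a + t *\<^sub>R e) = u c" by (rule inv) (use nn in \<open>simp add: inner_add_right ne t_def\<close>)
      finally show ?thesis .
    qed
    define R where "R = \<bar>n \<bullet> x - s0\<bar> + \<bar>n \<bullet> y - s0\<bar>"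
    have s: "u (pt (s0 - R)) = u (pt (s0 + R))" by (rule sym) (simp add: npt)
    have "u (pt (s0 - R)) \<le> u x" "u x \<le> u (pt (s0 + R))" "u (pt (s0 - R)) \<le> u y" "u y \<le> u (pt (s0 + R))"
      by (auto intro!: mono simp: npt R_def)
    then show ?thesis using s by simp
  next
    case 3
    have mono: "u c \<le> u a" if "n \<bullet> a \<le> n \<bullet> c" for a c
    proof -
      define t where "t = (n \<bullet> c - n \<bullet> a) / (n \<bullet> n)"
      have "t \<ge> 0" unfolding t_def using that nn by simp
      then have "u c \<le> u (c + t *\<^sub>R - e)" using 3 unfolding monoP_def by blast
      also have "u (c + t *\<^sub>R - e) = u a" by (rule inv) (use nn in \<open>simp add: inner_diff_right ne t_def\<close>)
      finally show ?thesis .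
    qed
    define R where "R = \<bar>n \<bullet> x - s0\<bar> + \<bar>n \<bullet> y - s0\<bar>"
    have s: "u (pt (s0 - R)) = u (pt (s0 + R))" by (rule sym) (simp add: npt)
    have "u x \<le> u (pt (s0 - R))" "u (pt (s0 + R)) \<le> u x" "u y \<le> u (pt (s0 - R))" "u (pt (s0 + R)) \<le> u y"
      by (auto intro!: mono simp: npt R_def)
    then show ?thesis using s by simp
  qed
qed



lemma axis_good:
  fixes u :: "'a::euclidean_space \<Rightarrow> real"
  assumes n: "n \<noteq> 0" and inv: "\<And>x y. n \<bullet> x = n \<bullet> y \<Longrightarrow> u x = u y"
  shows "symmetry_axis u (line_through p n)"
  unfolding symmetry_axis_def
proof (intro conjI allI impI)
  show "is_line (line_through p n)" unfolding is_line_def using n by blast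
  fix \<alpha> :: real and V z
  assume "orth_hyperplane (line_through p n) V" and z: "z \<in> line_through p n \<inter> V"
  then obtain p' d c where d: "d \<noteq> 0" "line_through p n = line_through p' d" "V = {x. d \<bullet> x = c}"
    unfolding orth_hyperplane_def by blast
  obtain l where l: "d = l *\<^sub>R n" using line_dir[OF d(2)] by blast
  have l0: "l \<noteq> 0" using l d(1) by auto
  show "\<exists>c. \<forall>x\<in>sphere z \<alpha> \<inter> V. u x = c"
  proof (intro exI[of _ "u z"] ballI)
    fix x assume "x \<in> sphere z \<alpha> \<inter> V"
    then have "d \<bullet> x = d \<bullet> z" using z d(3) by auto
    then have "n \<bullet> x = n \<bullet> z" using l l0 by simp
    then show "u x = u z" by (rule inv)
  qed
qed

lemma axis_bad:
  fixes u :: "'a::euclidean_space \<Rightarrow> real"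
  assumes dim: "DIM('a) \<ge> 2" and cont: "continuous_on UNIV u" and sep: "separable u"
    and n: "n \<noteq> 0" and inv: "\<And>x y. n \<bullet> x = n \<bullet> y \<Longrightarrow> u x = u y"
    and nc: "\<not> (\<forall>x y. u x = u y)"
    and ax: "symmetry_axis u L" and xL: "x \<in> L"
  shows "L = line_through x n"
proof -
  obtain p d where d: "d \<noteq> 0" "L = line_through p d" using ax unfolding symmetry_axis_def is_line_def by blast
  have "\<exists>l. d = l *\<^sub>R n"
  proof (rule ccontr)
    assume nd: "\<not> ?thesis"
    define c where "c = (n \<bullet> d) / (d \<bullet> d)"
    define nV where "nV = n - c *\<^sub>R d"
    have dd: "d \<bullet> d > 0" using d by simp
    have dnV: "d \<bullet> nV = 0" unfolding nV_def c_def using dd by (simp add: inner_diff_right inner_commute)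
    have nV0: "nV \<noteq> 0"
    proof
      assume "nV = 0"
      then have nc': "n = c *\<^sub>R d" unfolding nV_def by simp
      then have "c \<noteq> 0" using n by auto
      then have "d = (1/c) *\<^sub>R n" using nc' by simp
      then show False using nd by blast
    qed
    have nnV: "n \<bullet> nV = nV \<bullet> nV"
    proof -
      have "n = nV + c *\<^sub>R d" unfolding nV_def by simp
      then have "n \<bullet> nV = nV \<bullet> nV + c * (d \<bullet> nV)" by (metis inner_add_left inner_scaleR_left)
      then show ?thesis using dnV by simp
    qed
    have vv: "nV \<bullet> nV > 0" using nV0 by simp
    define V where "V = {y. d \<bullet> y = d \<bullet> p}"
    have orth: "orth_hyperplane L V" unfolding orth_hyperplane_def V_def using d by blast
    have pL: "p \<in> L \<inter> V" using d in_line unfolding V_def by auto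
    have pm: "u (p + a *\<^sub>R nV) = u (p - a *\<^sub>R nV)" if a: "a > 0" for a
    proof -
      define \<alpha> where "\<alpha> = a * norm nV"
      have \<alpha>: "\<alpha> > 0" unfolding \<alpha>_def using a nV0 by simp
      obtain c where c: "\<forall>y\<in>sphere p \<alpha> \<inter> V. u y = c"
        using ax \<alpha> orth pL unfolding symmetry_axis_def by blast
      have "p + a *\<^sub>R nV \<in> sphere p \<alpha> \<inter> V" "p - a *\<^sub>R nV \<in> sphere p \<alpha> \<inter> V"
        unfolding V_def \<alpha>_def using a dnV by (auto simp: dist_norm inner_add_right inner_diff_right)
      then show ?thesis using c by simp
    qed
    have sym: "u y = u z" if yz: "n \<bullet> y + n \<bullet> z = 2 * (n \<bullet> p)" for y z
    proof -
      consider "n \<bullet> y = n \<bullet> p" | "n \<bullet> y > n \<bullet> p" | "n \<bullet> y < n \<bullet> p" by linarith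
      then show ?thesis
      proof cases
        case 1 then show ?thesis using yz by (intro inv) simp
      next
        case 2
        define a where "a = (n \<bullet> y - n \<bullet> p) / (nV \<bullet> nV)"
        have a: "a > 0" unfolding a_def using 2 vv by simp
        have "u y = u (p + a *\<^sub>R nV)" by (rule inv) (use vv in \<open>simp add: inner_add_right nnV a_def\<close>)
        also have "\<dots> = u (p - a *\<^sub>R nV)" using pm[OF a] .
        also have "\<dots> = u z" by (rule inv) (use vv yz in \<open>simp add: inner_diff_right nnV a_def\<close>)
        finally show ?thesis .
      next
        case 3
        define a where "a = (n \<bullet> z - n \<bullet> p) / (nV \<bullet> nV)"
        have a: "a > 0" unfolding a_def using 3 yz vv by simp
        have "u z = u (p + a *\<^sub>R nV)" by (rule inv) (use vv in \<open>simp add: inner_add_right nnV a_def\<close>)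
        also have "\<dots> = u (p - a *\<^sub>R nV)" using pm[OF a] .
        also have "\<dots> = u y" by (rule inv) (use vv yz in \<open>simp add: inner_diff_right nnV a_def\<close>)
        finally show ?thesis by simp
      qed
    qed
    have "u y = u z" for y z using lemmaF[OF dim cont sep n inv sym] .
    then show False using nc by blast
  qed
  then obtain l where l: "d = l *\<^sub>R n" by blast
  have l0: "l \<noteq> 0" using l d(1) by auto
  have L: "L = line_through p n" using d(2) l line_scale[OF l0] by simp
  show ?thesis using line_same[of x p n] xL L by simp
qed

theorem lemma3p1:
  fixes u :: "'a::euclidean_space \<Rightarrow> real"
  assumes "DIM('a) \<ge> 2"
    and "continuous_on UNIV u"
    and "\<forall>x. u x > 0"
    and "separable u"
    and "\<not> (\<exists>xs. radially_symmetric u xs)"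
  shows "(\<forall>x. \<exists>!L. symmetry_axis u L \<and> x \<in> L)
    \<and> (\<forall>x y. y \<in> axis_at u x \<longrightarrow> axis_at u y = axis_at u x)
    \<and> (\<forall>x y. axis_at u x = axis_at u y \<or> parallel_lines (axis_at u x) (axis_at u y))"
proof -
  have nc: "\<not> (\<forall>x y. u x = u y)" using assms(5) const_radial by blast
  have "\<exists>e. e \<noteq> 0 \<and> \<not> symd u e" using radial_case[OF assms(4)] assms(5) by blast
  then obtain e where e: "e \<noteq> 0" "\<not> symd u e" by blast
  obtain n where n: "n \<noteq> 0" and inv: "\<And>x y. n \<bullet> x = n \<bullet> y \<Longrightarrow> u x = u y"
    using main_n[OF assms(2) assms(4) e] by blast
  have good: "symmetry_axis u (line_through x n) \<and> x \<in> line_through x n" for x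
    using axis_good[where u=u, OF n inv] in_line by blast
  have uniq: "L = line_through x n" if "symmetry_axis u L \<and> x \<in> L" for x L
    using axis_bad[OF assms(1) assms(2) assms(4) n inv nc] that by blast
  have ex1: "\<exists>!L. symmetry_axis u L \<and> x \<in> L" for x using good uniq by blast
  have at: "axis_at u x = line_through x n" for x
    unfolding axis_at_def using good uniq by (intro the_equality) blast+
  show ?thesis
  proof (intro conjI allI impI)
    fix x show "\<exists>!L. symmetry_axis u L \<and> x \<in> L" by (rule ex1)
  next
    fix x y assume "y \<in> axis_at u x"
    then show "axis_at u y = axis_at u x" unfolding at by (rule line_same)
  next
    fix x y show "axis_at u x = axis_at u y \<or> parallel_lines (axis_at u x) (axis_at u y)"
      unfolding at parallel_lines_def using n by blast
  qed
qed


end
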